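(* Let $n\ge 2$ be an integer and $A\subseteq L_n$. If $(X_n,\tau(A))$ is normal or countably paracompact, then $L_n\setminus A$ does not contain a closed uncountable subset of $(L_n,\tau_E|_{L_n})$.
   Context: For $\overline{x},\overline{a}\in\mathbb R^n$ let $|\overline{x}-\overline{a}|$ be the Euclidean distance and $B(\overline{a},\epsilon)=\{\overline{x}\in\mathbb R^n:|\overline{x}-\overline{a}|<\epsilon\}$. Let $P_n=\{\overline{x}\in\mathbb R^n: x_n>0\}$, $L_n=\{\overline{x}\in\mathbb R^n: x_n=0\}$, $X_n=P_n\cup L_n$, and let $\tau_E$ denote the Euclidean topology on $X_n$. For $\overline{a}\in L_n$ and $\epsilon>0$ put $\overline{a(\epsilon)}=(a_1,\dots,a_{n-1},\epsilon)$ and $\tilde B(\overline{a},\epsilon)=\{\overline{a}\}\cup B(\overline{a(\epsilon)},\epsilon)$. For $A\subseteq L_n$, the topology $\tau(A)$ on $X_n$ is generated by the local bases: at $\overline{a}\in P_n$, the sets $B(\overline{a},\epsilon)$ with $0<\epsilon<a_n$; at $\overline{a}\in A$, the sets $B(\overline{a},\epsilon)\cap X_n$ with $\epsilon>0$; at $\overline{a}\in L_n\setminus A$, the sets $\tilde B(\overline{a},\epsilon)$ with $\epsilon>0$. *)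

theory Defs
  imports "HOL-Analysis.Analysis"
begin

text \<open>Points of R^n (n = CARD('m) + 1 >= 2) are pairs (x', x_n) with x' in R^(n-1) and
  last coordinate x_n.  The product metric on this type is exactly the Euclidean metric.\<close>

type_synonym 'm pt = "(real ^ 'm) \<times> real"

definition Pn :: "'m::finite pt set" where "Pn = {p. snd p > 0}"
definition Ln :: "'m::finite pt set" where "Ln = {p. snd p = 0}"
definition Xn :: "'m::finite pt set" where "Xn = Pn \<union> Ln"

definition lift :: "'m::finite pt \<Rightarrow> real \<Rightarrow> 'm pt" where "lift a e = (fst a, e)"
definition tball :: "'m::finite pt \<Rightarrow> real \<Rightarrow> 'm pt set"
  where "tball a e = insert a (ball (lift a e) e)"

definition basic_nbhd :: "'m::finite pt set \<Rightarrow> 'm pt \<Rightarrow> 'm pt set \<Rightarrow> bool" where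
  "basic_nbhd A a V \<longleftrightarrow>
     (a \<in> Pn \<and> (\<exists>e. 0 < e \<and> e < snd a \<and> V = ball a e)) \<or>
     (a \<in> A \<and> (\<exists>e. 0 < e \<and> V = ball a e \<inter> Xn)) \<or>
     (a \<in> Ln - A \<and> (\<exists>e. 0 < e \<and> V = tball a e))"

definition tauA :: "'m::finite pt set \<Rightarrow> 'm pt topology" where
  "tauA A = topology_generated_by {V. \<exists>a. basic_nbhd A a V}"

definition countably_paracompact :: "'a topology \<Rightarrow> bool" where
  "countably_paracompact X \<longleftrightarrow>
     (\<forall>\<U>. countable \<U> \<and> (\<forall>U\<in>\<U>. openin X U) \<and> \<Union>\<U> = topspace X \<longrightarrow>
        (\<exists>\<V>. (\<forall>V\<in>\<V>. openin X V) \<and> \<Union>\<V> = topspace X \<and>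
              (\<forall>V\<in>\<V>. \<exists>U\<in>\<U>. V \<subseteq> U) \<and> locally_finite_in X \<V>))"

end

theory Submission
  imports Defs
begin


lemma perfect_kernel:
  fixes C :: "'a::euclidean_space set"
  assumes "closed C" "uncountable C"
  obtains P where "P \<subseteq> C" "closed P" "P \<noteq> {}"
    "\<forall>x\<in>P. \<forall>e>0. uncountable (ball x e \<inter> P)"
proof -
  obtain \<B> :: "'a set set" where B: "countable \<B>" "\<And>C. C \<in> \<B> \<Longrightarrow> open C"
       "\<And>S. open S \<Longrightarrow> \<exists>U. U \<subseteq> \<B> \<and> S = \<Union>U"
    by (rule univ_second_countable) blast
  define P where "P = {x\<in>C. \<forall>e>0. uncountable (ball x e \<inter> C)}"
  define I where "I = {B\<in>\<B>. countable (B \<inter> C)}"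
  have sub: "C - P \<subseteq> \<Union>((\<lambda>B. B \<inter> C) ` I)"
  proof
    fix x assume x: "x \<in> C - P"
    then obtain e where e: "e > 0" "countable (ball x e \<inter> C)" unfolding P_def by auto
    obtain U where U: "U \<subseteq> \<B>" "ball x e = \<Union>U" using B(3)[of "ball x e"] by auto
    have "x \<in> \<Union>U" using U(2) e(1) centre_in_ball[of x e] by (metis (no_types))
    then obtain B where B1: "B \<in> U" "x \<in> B" by blast
    have "B \<inter> C \<subseteq> ball x e \<inter> C" using U(2) B1(1) by blast
    then have "countable (B \<inter> C)" by (rule countable_subset[OF _ e(2)])
    then have "B \<in> I" unfolding I_def using U(1) B1(1) by blast
    moreover have "x \<in> B \<inter> C" using B1(2) x by blast
    ultimately show "x \<in> \<Union>((\<lambda>B. B \<inter> C) ` I)" by blast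
  qed
  have "I \<subseteq> \<B>" unfolding I_def by blast
  then have cI: "countable I" by (rule countable_subset[OF _ B(1)])
  have "countable (\<Union>((\<lambda>B. B \<inter> C) ` I))"
    by (rule countable_UN[OF cI]) (simp add: I_def)
  then have cnt: "countable (C - P)" by (rule countable_subset[OF sub])
  have unc: "uncountable (ball x e \<inter> P)" if "x \<in> P" "e > 0" for x e
  proof
    assume a: "countable (ball x e \<inter> P)"
    have s2: "ball x e \<inter> C \<subseteq> (ball x e \<inter> P) \<union> (C - P)" by blast
    have "countable ((ball x e \<inter> P) \<union> (C - P))" using a cnt by simp
    then have "countable (ball x e \<inter> C)" by (rule countable_subset[OF s2])
    moreover have "uncountable (ball x e \<inter> C)" using that unfolding P_def by blast
    ultimately show False by blast
  qed
  have ne: "P \<noteq> {}"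
  proof
    assume "P = {}" then have "countable C" using cnt by simp
    then show False using assms by simp
  qed
  have cl: "closed P"
  proof -
    have "closure P \<subseteq> P"
    proof
      fix x assume x: "x \<in> closure P"
      have PC: "P \<subseteq> C" unfolding P_def by blast
      have "closure P \<subseteq> C" using closure_minimal[OF PC assms(1)] .
      then have xC: "x \<in> C" using x by blast
      have "uncountable (ball x e \<inter> C)" if "e > 0" for e
      proof -
        have e2: "e/2 > 0" using that by simp
        obtain y where y: "y \<in> P" "dist y x < e/2" using x e2 unfolding closure_approachable by blast
        have "ball y (e/2) \<subseteq> ball x e"
        proof
          fix z assume "z \<in> ball y (e/2)"
          then have "dist y z < e/2" by simp
          then have "dist x z < e" using y(2) dist_triangle[of x z y] by (simp add: dist_commute)
          then show "z \<in> ball x e" by simp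
        qed
        then have ss: "ball y (e/2) \<inter> C \<subseteq> ball x e \<inter> C" by blast
        have "uncountable (ball y (e/2) \<inter> C)" using y(1) e2 unfolding P_def by blast
        then show ?thesis using countable_subset[OF ss] by (metis (no_types))
      qed
      then show "x \<in> P" using xC unfolding P_def by blast
    qed
    then show ?thesis using closure_subset_eq by blast
  qed
  have sub: "P \<subseteq> C" unfolding P_def by blast
  have unc': "\<forall>x\<in>P. \<forall>e>0. uncountable (ball x e \<inter> P)" using unc by blast
  show ?thesis by (rule that[OF sub cl ne unc'])
qed



lemma dense_seq:
  fixes P :: "'a::euclidean_space set"
  assumes "P \<noteq> {}" and unc0: "\<forall>x\<in>P. \<forall>e>0. uncountable (ball x e \<inter> P)"
  obtains f :: "nat \<Rightarrow> 'a" where "inj f" "range f \<subseteq> P" "P \<subseteq> closure (range f)"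
proof -
  have unc: "uncountable (ball x e \<inter> P)" if "x\<in>P" "e>0" for x e using unc0 that by blast
  obtain \<B> :: "'a set set" where B: "countable \<B>" "\<And>C. C \<in> \<B> \<Longrightarrow> open C"
       "\<And>S. open S \<Longrightarrow> \<exists>U. U \<subseteq> \<B> \<and> S = \<Union>U"
    by (rule univ_second_countable) blast
  define D where "D = (\<lambda>B. SOME x. x \<in> B \<inter> P) ` {B\<in>\<B>. B \<inter> P \<noteq> {}}"
  have cD: "countable D" unfolding D_def using B(1) by auto
  have DP: "D \<subseteq> P" unfolding D_def by (auto intro: someI2_ex)
  have dense: "P \<subseteq> closure D"
  proof
    fix x assume x: "x \<in> P"
    show "x \<in> closure D" unfolding closure_approachable
    proof (intro allI impI)
      fix e :: real assume e: "e > 0"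
      obtain U where U: "U \<subseteq> \<B>" "ball x e = \<Union>U" using B(3)[of "ball x e"] by auto
      then obtain B where B1: "B \<in> U" "x \<in> B" using e by (metis UnionE centre_in_ball)
      have "B \<inter> P \<noteq> {}" using B1 x by auto
      then have "(SOME x. x \<in> B \<inter> P) \<in> D" "(SOME x. x \<in> B \<inter> P) \<in> B" 
        unfolding D_def using U B1 by (auto intro: someI2_ex)
      moreover have "B \<subseteq> ball x e" using U B1 by auto
      ultimately show "\<exists>y\<in>D. dist y x < e" by (metis dist_commute mem_ball subsetD)
    qed
  qed
  have inf: "infinite D"
  proof
    assume "finite D"
    then have "closure D = D" by (simp add: finite_imp_closed)
    then have "P \<subseteq> D" using dense by simp
    obtain x where "x \<in> P" using assms(1) by auto
    then have "uncountable (ball x 1 \<inter> P)" using unc by simp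
    moreover have "ball x 1 \<inter> P \<subseteq> D" using \<open>P \<subseteq> D\<close> by auto
    ultimately show False using \<open>finite D\<close> countable_finite countable_subset
      by (metis finite_subset)
  qed
  have bij: "bij_betw (from_nat_into D) UNIV D" using bij_betw_from_nat_into cD inf by blast
  show ?thesis
    apply (rule that[of "from_nat_into D"])
    using bij DP dense by (auto simp: bij_betw_def)
qed

lemma core:
  fixes P :: "'a::euclidean_space set" and f :: "nat \<Rightarrow> 'a"
  assumes cl: "closed P" and ne: "P \<noteq> {}"
    and unc0: "\<forall>x\<in>P. \<forall>e>0. uncountable (ball x e \<inter> P)"
    and rf: "range f \<subseteq> P" and dense: "P \<subseteq> closure (range f)"
    and sig0: "\<forall>j. \<sigma> j > 0" and rho0: "\<forall>e\<in>P - range f. \<rho> e > 0"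
  shows "\<exists>j e. e \<in> P - range f \<and> \<kappa> e \<le> j \<and> (dist (f j) e)^2 < 4 * \<sigma> j * \<rho> e"
proof (rule ccontr)
  have unc: "uncountable (ball x e \<inter> P)" if "x\<in>P" "e>0" for x e using unc0 that by blast
  have sig: "\<sigma> j > 0" for j using sig0 by blast
  have rho: "\<rho> e > 0" if "e \<in> P - range f" for e using rho0 that by blast
  assume H: "\<not> ?thesis"
  have H': "4 * \<sigma> j * \<rho> e \<le> (dist (f j) e)^2" if "e \<in> P - range f" "\<kappa> e \<le> j" for j e
    using H that by (auto simp: not_less)
  define E where "E k m = {e \<in> P - range f. \<kappa> e = k \<and> 1/(real m+1) \<le> \<rho> e}" for k m
  define G where "G = (\<lambda>(k,m). P - closure (E k m)) ` UNIV \<union> (\<lambda>j. P - {f j}) ` UNIV"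
  have key: "\<exists>j\<ge>k. f j \<in> ball x e" if x: "x \<in> P" and e: "e > 0" for x e k
  proof -
    define Ob where "Ob = ball x e - f ` {..<k}"
    have oO: "open Ob" unfolding Ob_def by (intro open_Diff finite_imp_closed) auto
    have "uncountable (ball x e \<inter> P)" using unc x e by simp
    moreover have "ball x e \<inter> P \<subseteq> (Ob \<inter> P) \<union> f ` {..<k}" unfolding Ob_def by auto
    ultimately have "Ob \<inter> P \<noteq> {}"
      by (metis countable_finite countable_subset finite_imageI finite_lessThan sup_bot.left_neutral countable_Un_iff)
    then obtain y where y: "y \<in> Ob" "y \<in> P" by auto
    obtain d where d: "d > 0" "ball y d \<subseteq> Ob" using oO y(1) open_contains_ball by blast
    have "y \<in> closure (range f)" using dense y by auto
    then obtain z where z: "z \<in> range f" "dist z y < d" using d closure_approachable by metis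
    then have "z \<in> Ob" using d by (auto simp: dist_commute)
    then obtain j where "z = f j" "j \<ge> k" using z unfolding Ob_def
    proof -
      obtain j where "z = f j" using z by auto
      moreover have "\<not> j < k" using \<open>z \<in> Ob\<close> calculation unfolding Ob_def by auto
      ultimately show ?thesis using that by (simp add: not_less)
    qed
    then show ?thesis using \<open>z \<in> Ob\<close> unfolding Ob_def by auto
  qed
  have Gprop: "openin (top_of_set P) T \<and> P \<subseteq> closure T" if "T \<in> G" for T
  proof -
    { fix k m assume T: "T = P - closure (E k m)"
      have "openin (top_of_set P) T" unfolding T
        using openin_open_Int[of "- closure (E k m)" P] by (simp add: Diff_eq open_Compl)
      moreover have "P \<subseteq> closure T"
      proof
        fix y assume y: "y \<in> P"
        show "y \<in> closure T" unfolding closure_approachable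
        proof (intro allI impI)
          fix e :: real assume e: "e > 0"
          obtain j where j: "j \<ge> k" "f j \<in> ball y e" using key[OF y e] by blast
          define \<delta> where "\<delta> = min 1 (4 * \<sigma> j / (real m + 1))"
          have dpos: "\<delta> > 0" unfolding \<delta>_def using sig[of j] by auto
          have "f j \<notin> closure (E k m)"
          proof
            assume "f j \<in> closure (E k m)"
            then obtain w where w: "w \<in> E k m" "dist w (f j) < \<delta>"
              using dpos closure_approachable by metis
            have wP: "w \<in> P - range f" "\<kappa> w \<le> j" "1/(real m+1) \<le> \<rho> w" using w(1) j unfolding E_def by auto
            have h1: "4 * \<sigma> j * \<rho> w \<le> (dist (f j) w)^2" using H'[OF wP(1,2)] .
            have dl: "dist (f j) w < \<delta>" using w(2) by (simp add: dist_commute)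
            have "\<delta> \<le> 1" unfolding \<delta>_def by simp
            then have "(dist (f j) w)^2 \<le> dist (f j) w"
              using dl by (simp add: power2_eq_square mult_le_cancel_right1 mult_left_le)
            also have "\<dots> < 4 * \<sigma> j / (real m + 1)" using dl unfolding \<delta>_def by simp
            also have "\<dots> = 4 * \<sigma> j * (1 / (real m + 1))" by simp
            also have "\<dots> \<le> 4 * \<sigma> j * \<rho> w" using wP(3) sig[of j] by (intro mult_left_mono) auto
            finally show False using h1 by simp
          qed
          moreover have "f j \<in> P" using rf by auto
          ultimately show "\<exists>z\<in>T. dist z y < e" using j T by (auto simp: dist_commute)
        qed
      qed
      ultimately have ?thesis by simp }
    moreover
    { fix j assume T: "T = P - {f j}"
      have "openin (top_of_set P) T" unfolding T
        using openin_open_Int[of "- {f j}" P] by (simp add: Diff_eq open_Compl)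
      moreover have "P \<subseteq> closure T"
      proof
        fix y assume y: "y \<in> P"
        show "y \<in> closure T" unfolding closure_approachable
        proof (intro allI impI)
          fix e :: real assume e: "e > 0"
          have "uncountable (ball y e \<inter> P)" using unc y e by simp
          then have "ball y e \<inter> P - {f j} \<noteq> {}"
            by (metis countable_empty countable_insert countable_subset Diff_eq_empty_iff)
          then show "\<exists>z\<in>T. dist z y < e" using T by (auto simp: dist_commute)
        qed
      qed
      ultimately have ?thesis by simp }
    moreover have "(\<exists>k m. T = P - closure (E k m)) \<or> (\<exists>j. T = P - {f j})"
      using that unfolding G_def by auto
    ultimately show ?thesis by blast
  qed
  have cG: "countable G" unfolding G_def by auto
  have "P \<subseteq> closure (\<Inter>G)" using Baire[OF cl cG Gprop] by blast
  then have "\<Inter>G \<noteq> {}" using ne by auto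
  then obtain x where x: "x \<in> \<Inter>G" by auto
  have xP: "x \<in> P" using x unfolding G_def by auto
  have xf: "x \<notin> range f" using x unfolding G_def by auto
  have "\<rho> x > 0" using rho xP xf by auto
  then obtain n where n: "inverse (real (Suc n)) < \<rho> x" using reals_Archimedean by blast
  have "x \<in> E (\<kappa> x) n" unfolding E_def using xP xf n by (auto simp: inverse_eq_divide add.commute)
  then have "x \<in> closure (E (\<kappa> x) n)" using closure_subset by auto
  moreover have "x \<in> P - closure (E (\<kappa> x) n)" using x unfolding G_def by auto
  ultimately show False by simp
qed



lemma snd_ball_pos:
  fixes z :: "'m::finite pt"
  assumes "z \<in> ball (lift d r) r" shows "snd z > 0"
proof -
  have "dist (snd (lift d r)) (snd z) \<le> dist (lift d r) z" by (rule dist_snd_le)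
  then have "\<bar>r - snd z\<bar> < r" using assms by (simp add: lift_def dist_real_def)
  then show ?thesis by linarith
qed

lemma tball_sub_Xn: "a \<in> Ln \<Longrightarrow> tball a e \<subseteq> (Xn :: 'm::finite pt set)"
  using snd_ball_pos unfolding tball_def Xn_def Pn_def by fastforce

lemma tball_Ln: "tball a e \<inter> Ln = {a} \<inter> (Ln :: 'm::finite pt set)"
  using snd_ball_pos unfolding tball_def Ln_def by fastforce

lemma tball_mono:
  fixes d :: "'m::finite pt"
  assumes "0 < r" "r \<le> s" shows "tball d r \<subseteq> tball d s"
proof
  fix z assume z: "z \<in> tball d r"
  show "z \<in> tball d s"
  proof (cases "z = d")
    case False
    then have "dist (lift d r) z < r" using z by (simp add: tball_def)
    moreover have "dist (lift d s) (lift d r) = s - r" using assms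
      by (simp add: lift_def dist_Pair_Pair dist_real_def)
    ultimately have "dist (lift d s) z < s" using dist_triangle[of "lift d s" z "lift d r"] by linarith
    then show ?thesis by (simp add: tball_def)
  qed (simp add: tball_def)
qed

lemma balls_meet:
  fixes x y :: "'a::real_normed_vector"
  assumes "dist x y < r + s" "r > 0" "s > 0"
  shows "ball x r \<inter> ball y s \<noteq> {}"
proof -
  define D where "D = dist x y"
  define z where "z = x + (r/(r+s)) *\<^sub>R (y - x)"
  have "dist x z = (r/(r+s)) * D" unfolding z_def D_def dist_norm using assms
    by (simp add: norm_minus_commute)
  also have "\<dots> < r" using assms mult_strict_left_mono[of D "r+s" r] unfolding D_def by (simp add: field_simps)
  finally have 1: "dist x z < r" .
  have c: "1 - r/(r+s) = s/(r+s)" using assms by (simp add: field_simps)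
  have "z - y = (1 - r/(r+s)) *\<^sub>R (x - y)" unfolding z_def by (simp add: algebra_simps)
  then have "z - y = (s/(r+s)) *\<^sub>R (x - y)" using c by simp
  then have "dist z y = (s/(r+s)) * D" using assms unfolding D_def dist_norm
    by simp
  also have "\<dots> < s" using assms mult_strict_left_mono[of D "r+s" s] unfolding D_def by (simp add: field_simps)
  finally have "dist z y < s" .
  with 1 show ?thesis by (auto simp: dist_commute)
qed

lemma tballs_meet:
  fixes d e :: "'m::finite pt"
  assumes "d \<in> Ln" "e \<in> Ln" "r > 0" "s > 0" "(dist d e)^2 < 4 * r * s"
  shows "tball d r \<inter> tball e s \<noteq> {}"
proof -
  have de: "dist d e = dist (fst d) (fst e)" using assms(1,2)
    by (simp add: Ln_def dist_prod_def)
  have "(dist (lift d r) (lift e s))^2 = (dist (fst d) (fst e))^2 + (r - s)^2"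
    by (simp add: lift_def dist_Pair_Pair dist_real_def)
  also have "\<dots> < (r + s)^2" using assms(5) de by (simp add: power2_eq_square algebra_simps)
  finally have "dist (lift d r) (lift e s) < r + s"
    using assms(3,4) by (smt (verit) power_mono zero_le_dist)
  then have "ball (lift d r) r \<inter> ball (lift e s) s \<noteq> {}" using balls_meet assms(3,4) by blast
  then show ?thesis unfolding tball_def by blast
qed

lemma bn_A: "x \<in> A \<Longrightarrow> e > 0 \<Longrightarrow> basic_nbhd A x (ball x e \<inter> Xn)"
  unfolding basic_nbhd_def by blast
lemma bn_L: "x \<in> Ln - A \<Longrightarrow> e > 0 \<Longrightarrow> basic_nbhd A x (tball x e)"
  unfolding basic_nbhd_def by blast

lemma topspace_tauA:
  assumes "A \<subseteq> Ln" shows "topspace (tauA A) = (Xn :: 'm::finite pt set)"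
proof -
  have "V \<subseteq> Xn" if "basic_nbhd A a V" for a V
  proof -
    { fix e assume "a \<in> Pn" and e: "0 < e" "e < snd a" and V: "V = ball a e"
      have "V \<subseteq> Xn"
      proof
        fix z assume "z \<in> V"
        then have "dist (snd a) (snd z) < e" using V dist_snd_le[of a z] by simp
        then show "z \<in> Xn" using e by (simp add: Xn_def Pn_def dist_real_def abs_less_iff)
      qed }
    moreover have "a \<in> Ln - A \<Longrightarrow> tball a e \<subseteq> Xn" for e using tball_sub_Xn by blast
    ultimately show ?thesis using that unfolding basic_nbhd_def by blast
  qed
  moreover have "\<exists>V. basic_nbhd A x V \<and> x \<in> V" if "x \<in> Xn" for x
  proof -
    { assume x: "x \<in> Pn"
      then have "basic_nbhd A x (ball x (snd x / 2))" unfolding basic_nbhd_def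
        by (intro disjI1 conjI exI[of _ "snd x/2"]) (auto simp: Pn_def)
      then have ?thesis using x unfolding Pn_def by force }
    moreover
    { assume x: "x \<in> A"
      then have "basic_nbhd A x (ball x 1 \<inter> Xn)" by (simp add: bn_A)
      then have ?thesis using \<open>x \<in> Xn\<close> by force }
    moreover
    { assume x: "x \<in> Ln - A"
      then have "basic_nbhd A x (tball x 1)" by (simp add: bn_L)
      then have ?thesis by (force simp: tball_def) }
    ultimately show ?thesis using that unfolding Xn_def by blast
  qed
  ultimately show ?thesis unfolding tauA_def topology_generated_by_topspace by blast
qed

lemma basic_open: "basic_nbhd A a V \<Longrightarrow> openin (tauA A) V"
  unfolding tauA_def openin_topology_generated_by_iff
  by (rule generate_topology_on.Basis) blast

lemma open_tball:
  fixes A :: "'m::finite pt set"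
  assumes "openin (tauA A) U" "d \<in> U" "d \<in> Ln - A"
  shows "\<exists>r>0. tball d r \<subseteq> U"
proof -
  have "generate_topology_on {V. \<exists>a. basic_nbhd A a V} U"
    using assms(1) unfolding tauA_def openin_topology_generated_by_iff .
  then show ?thesis using assms(2,3)
  proof (induction arbitrary: d)
    case Empty then show ?case by simp
  next
    case (Int a b)
    obtain r1 where r1: "r1 > 0" "tball d r1 \<subseteq> a" using Int.IH(1)[of d] Int.prems by blast
    obtain r2 where r2: "r2 > 0" "tball d r2 \<subseteq> b" using Int.IH(2)[of d] Int.prems by blast
    have "tball d (min r1 r2) \<subseteq> tball d r1" "tball d (min r1 r2) \<subseteq> tball d r2"
      by (rule tball_mono, use r1 r2 in simp_all)+
    then show ?case using r1 r2 by (intro exI[of _ "min r1 r2"]) auto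
  next
    case (UN K)
    then obtain k where "k \<in> K" "d \<in> k" by auto
    then obtain r where "r > 0" "tball d r \<subseteq> k" using UN by blast
    then show ?case using \<open>k \<in> K\<close> by blast
  next
    case (Basis V)
    then obtain a where a: "basic_nbhd A a V" by auto
    have d0: "snd d = 0" using Basis.prems by (simp add: Ln_def)
    { fix e assume e: "0 < e" "e < snd a" and V: "V = ball a e"
      have "dist (snd a) (snd d) \<le> dist a d" by (rule dist_snd_le)
      then have False using Basis.prems V e d0 by (simp add: dist_real_def) }
    moreover
    { fix e assume e: "0 < e" and V: "V = ball a e \<inter> Xn"
      define r where "r = (e - dist a d) / 2"
      have rpos: "r > 0" using Basis.prems V unfolding r_def by simp
      have "tball d r \<subseteq> V"
      proof
        fix z assume z: "z \<in> tball d r"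
        show "z \<in> V"
        proof (cases "z = d")
          case False
          then have zb: "z \<in> ball (lift d r) r" using z by (simp add: tball_def)
          have "dist (lift d r) d = r" using d0 rpos
            by (cases d) (simp add: lift_def dist_Pair_Pair)
          then have "dist z d < 2 * r" using zb dist_triangle[of z d "lift d r"]
            by (simp add: dist_commute)
          then have "dist a z < e" using dist_triangle[of a z d] unfolding r_def by (simp add: dist_commute)
          moreover have "z \<in> Xn" using snd_ball_pos[OF zb] by (simp add: Xn_def Pn_def)
          ultimately show ?thesis using V by simp
        qed (use Basis.prems in simp)
      qed
      then have ?case using rpos by blast }
    moreover
    { fix e assume a': "a \<in> Ln - A" and e: "0 < e" and V: "V = tball a e"
      have ?case
      proof (cases "d = a")
        case True then show ?thesis using e V by blast
      next
        case False
        then have "d \<in> ball (lift a e) e" using Basis.prems V by (simp add: tball_def)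
        then have "snd d > 0" by (rule snd_ball_pos)
        then show ?thesis using d0 by simp
      qed }
    ultimately show ?case using a unfolding basic_nbhd_def by blast
  qed
qed

lemma closed_sub:
  fixes A :: "'m::finite pt set"
  assumes "A \<subseteq> Ln" "C \<subseteq> Ln - A" "closedin (subtopology euclidean Ln) C" "S \<subseteq> C"
  shows "closedin (tauA A) S"
proof -
  obtain T where T: "closed T" "C = T \<inter> Ln" using assms(3) unfolding closedin_closed by blast
  have SL: "S \<subseteq> Ln" "S \<inter> A = {}" "S \<subseteq> T" using assms(2,4) T(2) by blast+
  have "openin (tauA A) (Xn - S)"
    unfolding openin_subopen[of _ "Xn - S"]
  proof
    fix x assume x: "x \<in> Xn - S"
    { assume xP: "x \<in> Pn"
      have sx: "snd x > 0" using xP by (simp add: Pn_def)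
      have "basic_nbhd A x (ball x (snd x / 2))" using xP sx unfolding basic_nbhd_def
        by (intro disjI1 conjI exI[of _ "snd x/2"]) auto
      then have o: "openin (tauA A) (ball x (snd x / 2))" by (rule basic_open)
      have c: "x \<in> ball x (snd x / 2)" using sx by simp
      have "ball x (snd x / 2) \<subseteq> Xn - S"
      proof
        fix z assume "z \<in> ball x (snd x / 2)"
        then have "dist (snd x) (snd z) < snd x / 2" using dist_snd_le[of x z] by simp
        then have z0: "snd z > 0" using sx by (auto simp: dist_real_def abs_if split: if_splits)
        then have "z \<in> Xn" by (simp add: Xn_def Pn_def)
        moreover have "z \<notin> Ln" using z0 by (simp add: Ln_def)
        ultimately show "z \<in> Xn - S" using SL(1) by blast
      qed
      then have "\<exists>V. openin (tauA A) V \<and> x \<in> V \<and> V \<subseteq> Xn - S" using o c by blast }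
    moreover
    { assume xA: "x \<in> A"
      have "x \<in> Ln" using xA assms(1) by blast
      then have "x \<notin> T" using T(2) assms(2) xA by blast
      then have "x \<in> - T" by simp
      moreover have "open (- T)" using T(1) by (simp add: open_Compl)
      ultimately obtain e where e: "e > 0" "ball x e \<subseteq> - T"
        using open_contains_ball by blast
      have "basic_nbhd A x (ball x e \<inter> Xn)" using xA e(1) by (rule bn_A)
      then have o: "openin (tauA A) (ball x e \<inter> Xn)" by (rule basic_open)
      have c: "x \<in> ball x e \<inter> Xn" using e(1) x by simp
      have "ball x e \<inter> Xn \<subseteq> Xn - S" using e(2) SL(3) by blast
      then have "\<exists>V. openin (tauA A) V \<and> x \<in> V \<and> V \<subseteq> Xn - S" using o c by blast }
    moreover
    { assume xL: "x \<in> Ln - A"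
      have "basic_nbhd A x (tball x 1)" using xL by (simp add: bn_L)
      then have o: "openin (tauA A) (tball x 1)" by (rule basic_open)
      have c: "x \<in> tball x 1" by (simp add: tball_def)
      have t1: "tball x 1 \<subseteq> Xn" using xL by (intro tball_sub_Xn) blast
      have t2: "tball x 1 \<inter> Ln = {x} \<inter> Ln" by (rule tball_Ln)
      have "tball x 1 \<subseteq> Xn - S"
      proof
        fix z assume z: "z \<in> tball x 1"
        have "z \<notin> S"
        proof
          assume "z \<in> S"
          then have "z \<in> Ln" using SL(1) by blast
          then have "z = x" using t2 z by blast
          then show False using x \<open>z \<in> S\<close> by blast
        qed
        then show "z \<in> Xn - S" using t1 z by blast
      qed
      then have "\<exists>V. openin (tauA A) V \<and> x \<in> V \<and> V \<subseteq> Xn - S" using o c by blast }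
    ultimately show "\<exists>V. openin (tauA A) V \<and> x \<in> V \<and> V \<subseteq> Xn - S"
      using x unfolding Xn_def by blast
  qed
  moreover have "S \<subseteq> Xn" using SL(1) by (auto simp: Xn_def)
  ultimately show ?thesis using topspace_tauA[OF assms(1)] by (simp add: closedin_def)
qed



theorem mainTheorem19:
  fixes A :: "('m::finite) pt set"
  assumes "A \<subseteq> Ln"
    and "normal_space (tauA A) \<or> countably_paracompact (tauA A)"
  shows "\<not> (\<exists>C. C \<subseteq> Ln - A \<and> closedin (subtopology euclidean Ln) C \<and> uncountable C)"
proof
  assume "\<exists>C. C \<subseteq> Ln - A \<and> closedin (subtopology euclidean Ln) C \<and> uncountable C"
  then obtain C where C: "C \<subseteq> Ln - A" "closedin (subtopology euclidean Ln) C" "uncountable C" by blast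
  have clL: "closed (Ln :: 'm pt set)" unfolding Ln_def
    by (rule closed_Collect_eq[OF continuous_on_snd[OF continuous_on_id] continuous_on_const])
  have clC: "closed C" using closedin_closed_trans[OF C(2) clL] .
  obtain P where P: "P \<subseteq> C" "closed P" "P \<noteq> {}"
    "\<forall>x\<in>P. \<forall>e>0. uncountable (ball x e \<inter> P)"
    using perfect_kernel[OF clC C(3)] by blast
  obtain f :: "nat \<Rightarrow> 'm pt" where f: "inj f" "range f \<subseteq> P" "P \<subseteq> closure (range f)"
    using dense_seq[of P, OF P(3) P(4)] by blast
  have clS: "closedin (tauA A) S" if "S \<subseteq> P" for S
    by (rule closed_sub[OF assms(1) C(1,2)]) (use that P(1) in blast)
  note unc' = P(4)
  have PL: "P \<subseteq> Ln - A" using P(1) C(1) by blast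
  have top: "topspace (tauA A) = Xn" using topspace_tauA[OF assms(1)] .
  have PX: "P \<subseteq> Xn" using PL by (auto simp: Xn_def)
  show False
    using assms(2)
  proof
    assume N: "normal_space (tauA A)"
    have c1: "closedin (tauA A) (range f)" using clS[OF f(2)] .
    have c2: "closedin (tauA A) (P - range f)" using clS[of "P - range f"] by blast
    have dj: "disjnt (range f) (P - range f)" by (simp add: disjnt_def)
    have "\<exists>U V. openin (tauA A) U \<and> openin (tauA A) V \<and> range f \<subseteq> U \<and> P - range f \<subseteq> V \<and> disjnt U V"
      using N[unfolded normal_space_def, rule_format, OF conjI[OF c1 conjI[OF c2 dj]]] .
    then obtain U V where UV: "openin (tauA A) U" "openin (tauA A) V" "range f \<subseteq> U"
      "P - range f \<subseteq> V" "disjnt U V" by (elim exE conjE)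
    define \<sigma> where "\<sigma> j = (SOME r. r > 0 \<and> tball (f j) r \<subseteq> U)" for j
    define \<rho> where "\<rho> e = (SOME r. r > 0 \<and> tball e r \<subseteq> V)" for e
    have s: "\<sigma> j > 0 \<and> tball (f j) (\<sigma> j) \<subseteq> U" for j
    proof -
      have a1: "f j \<in> U" using UV(3) by blast
      have a2: "f j \<in> Ln - A" using f(2) PL by blast
      have "\<exists>r>0. tball (f j) r \<subseteq> U" by (rule open_tball[OF UV(1) a1 a2])
      then show ?thesis unfolding \<sigma>_def by (rule someI_ex)
    qed
    have r: "\<rho> e > 0 \<and> tball e (\<rho> e) \<subseteq> V" if "e \<in> P - range f" for e
    proof -
      have a1: "e \<in> V" using UV(4) that by blast
      have a2: "e \<in> Ln - A" using that PL by blast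
      have "\<exists>r>0. tball e r \<subseteq> V" by (rule open_tball[OF UV(2) a1 a2])
      then show ?thesis unfolding \<rho>_def by (rule someI_ex)
    qed
    have sp: "\<And>j. \<sigma> j > 0" using s by blast
    have rp: "\<And>e. e \<in> P - range f \<Longrightarrow> \<rho> e > 0" using r by blast
    have sp': "\<forall>j. \<sigma> j > 0" using sp by blast
    have rp': "\<forall>e\<in>P - range f. \<rho> e > 0" using rp by blast
    obtain j e where je: "e \<in> P - range f" "(dist (f j) e)^2 < 4 * \<sigma> j * \<rho> e"
      using core[where P=P and f=f and \<sigma>=\<sigma> and \<rho>=\<rho> and \<kappa>="\<lambda>_. 0", OF P(2,3) unc' f(2,3) sp' rp'] by (elim exE conjE)
    have fjL: "f j \<in> Ln" using f(2) PL by blast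
    have eL: "e \<in> Ln" using je(1) PL by blast
    have "tball (f j) (\<sigma> j) \<inter> tball e (\<rho> e) \<noteq> {}"
      by (rule tballs_meet[OF fjL eL sp rp[OF je(1)] je(2)])
    then show False using s[of j] r[OF je(1)] UV(5) by (auto simp: disjnt_def)
  next
    assume CP: "countably_paracompact (tauA A)"
    define F where "F k = f ` {k..}" for k
    define \<U> where "\<U> = range (\<lambda>k. Xn - F k)"
    have cU: "countable \<U>" unfolding \<U>_def by simp
    have oU: "\<forall>U\<in>\<U>. openin (tauA A) U"
    proof
      fix U assume "U \<in> \<U>"
      then obtain k where k: "U = Xn - F k" unfolding \<U>_def by blast
      have "F k \<subseteq> P" using f(2) unfolding F_def by auto
      then have "closedin (tauA A) (F k)" using clS by blast
      then show "openin (tauA A) U" using k top by (metis closedin_def)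
    qed
    have uU: "\<Union>\<U> = topspace (tauA A)"
    proof
      show "\<Union>\<U> \<subseteq> topspace (tauA A)" using top unfolding \<U>_def by auto
      show "topspace (tauA A) \<subseteq> \<Union>\<U>"
      proof
        fix x assume x: "x \<in> topspace (tauA A)"
        show "x \<in> \<Union>\<U>"
        proof (cases "x \<in> range f")
          case True
          then obtain j where j: "x = f j" by auto
          have "x \<notin> F (Suc j)" using f(1) j unfolding F_def by (auto dest: injD)
          then show ?thesis using x top unfolding \<U>_def by blast
        next
          case False
          then have "x \<notin> F 0" unfolding F_def by auto
          then show ?thesis using x top unfolding \<U>_def by blast
        qed
      qed
    qed
    obtain \<V> where V: "\<forall>V\<in>\<V>. openin (tauA A) V" "\<Union>\<V> = topspace (tauA A)"
      "\<forall>V\<in>\<V>. \<exists>U\<in>\<U>. V \<subseteq> U" "locally_finite_in (tauA A) \<V>"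
    proof -
      have "\<exists>\<V>. (\<forall>V\<in>\<V>. openin (tauA A) V) \<and> \<Union>\<V> = topspace (tauA A) \<and>
              (\<forall>V\<in>\<V>. \<exists>U\<in>\<U>. V \<subseteq> U) \<and> locally_finite_in (tauA A) \<V>"
        using CP[unfolded countably_paracompact_def, rule_format, OF conjI[OF cU conjI[OF oU uU]]] .
      then show ?thesis using that by (elim exE conjE) 
    qed
    define kV where "kV V = (SOME k. V \<subseteq> Xn - F k)" for V
    have kV: "V \<subseteq> Xn - F (kV V)" if "V \<in> \<V>" for V
    proof -
      have "\<exists>k. V \<subseteq> Xn - F k" using V(3) that unfolding \<U>_def by blast
      then show ?thesis unfolding kV_def by (rule someI_ex)
    qed
    define W where "W e = (SOME W. openin (tauA A) W \<and> e \<in> W \<and> finite {U \<in> \<V>. U \<inter> W \<noteq> {}})" for e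
    have Wp: "openin (tauA A) (W e) \<and> e \<in> W e \<and> finite {U \<in> \<V>. U \<inter> W e \<noteq> {}}" if "e \<in> Xn" for e
    proof -
      have "\<exists>W. openin (tauA A) W \<and> e \<in> W \<and> finite {U \<in> \<V>. U \<inter> W \<noteq> {}}"
        using V(4) that top unfolding locally_finite_in_def by blast
      then show ?thesis unfolding W_def by (rule someI_ex)
    qed
    define \<rho> where "\<rho> e = (SOME r. r > 0 \<and> tball e r \<subseteq> W e)" for e
    have r: "\<rho> e > 0 \<and> tball e (\<rho> e) \<subseteq> W e" if "e \<in> P - range f" for e
    proof -
      have eX: "e \<in> Xn" using that PX by blast
      have a2: "e \<in> Ln - A" using that PL by blast
      have "\<exists>r>0. tball e r \<subseteq> W e" by (rule open_tball[OF conjunct1[OF Wp[OF eX]] conjunct1[OF conjunct2[OF Wp[OF eX]]] a2])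
      then show ?thesis unfolding \<rho>_def by (rule someI_ex)
    qed
    define \<kappa> where "\<kappa> e = Max (kV ` {U \<in> \<V>. U \<inter> W e \<noteq> {}})" for e
    define Vj where "Vj j = (SOME V. V \<in> \<V> \<and> f j \<in> V)" for j
    have Vj: "Vj j \<in> \<V> \<and> f j \<in> Vj j" for j
    proof -
      have "f j \<in> Xn" using PX f(2) by blast
      then have "f j \<in> \<Union>\<V>" using V(2) top by simp
      then have "\<exists>V. V \<in> \<V> \<and> f j \<in> V" by blast
      then show ?thesis unfolding Vj_def by (rule someI_ex)
    qed
    define \<sigma> where "\<sigma> j = (SOME r. r > 0 \<and> tball (f j) r \<subseteq> Vj j)" for j
    have s: "\<sigma> j > 0 \<and> tball (f j) (\<sigma> j) \<subseteq> Vj j" for j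
    proof -
      have a0: "openin (tauA A) (Vj j)" using V(1) Vj[of j] by blast
      have a1: "f j \<in> Vj j" using Vj[of j] by blast
      have a2: "f j \<in> Ln - A" using f(2) PL by blast
      have "\<exists>r>0. tball (f j) r \<subseteq> Vj j" by (rule open_tball[OF a0 a1 a2])
      then show ?thesis unfolding \<sigma>_def by (rule someI_ex)
    qed
    have sp: "\<And>j. \<sigma> j > 0" using s by blast
    have rp: "\<And>e. e \<in> P - range f \<Longrightarrow> \<rho> e > 0" using r by blast
    have sp': "\<forall>j. \<sigma> j > 0" using sp by blast
    have rp': "\<forall>e\<in>P - range f. \<rho> e > 0" using rp by blast
    obtain j e where je: "e \<in> P - range f" "\<kappa> e \<le> j" "(dist (f j) e)^2 < 4 * \<sigma> j * \<rho> e"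
      using core[where P=P and f=f and \<sigma>=\<sigma> and \<rho>=\<rho> and \<kappa>=\<kappa>, OF P(2,3) unc' f(2,3) sp' rp'] by (elim exE conjE)
    have fjL: "f j \<in> Ln" using f(2) PL by blast
    have eL: "e \<in> Ln" using je(1) PL by blast
    have "tball (f j) (\<sigma> j) \<inter> tball e (\<rho> e) \<noteq> {}"
      by (rule tballs_meet[OF fjL eL sp rp[OF je(1)] je(3)])
    moreover have "tball (f j) (\<sigma> j) \<subseteq> Vj j" using s[of j] by blast
    moreover have "tball e (\<rho> e) \<subseteq> W e" using r[OF je(1)] by blast
    ultimately have meet: "Vj j \<inter> W e \<noteq> {}" by blast
    have eX: "e \<in> Xn" using je(1) PX by blast
    have "finite {U \<in> \<V>. U \<inter> W e \<noteq> {}}" using Wp[OF eX] by blast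
    then have "kV (Vj j) \<le> \<kappa> e" unfolding \<kappa>_def using meet Vj[of j] by (intro Max_ge) auto
    then have "f j \<in> F (kV (Vj j))" using je(2) unfolding F_def by auto
    moreover have "f j \<in> Xn - F (kV (Vj j))" using kV[OF conjunct1[OF Vj[of j]]] conjunct2[OF Vj[of j]] by (rule subsetD)
    ultimately show False by blast
  qed
qed

end
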